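(* For every $J\subseteq\{0,1,\dots,n-1\}$, $$\varphi(X_J)=2^{\#J}\sum_{F\in\mathcal{F}_n,\ F\subseteq J\cup(J+1)}P_F.$$
   Context: $B_n$: signed permutations $w=w_1\dots w_n$, values ordered $\cdots<-2<-1<1<2<\cdots$, $w_0=0$; $\mathrm{Des}(w)=\{i\in\{0,\dots,n-1\}:w_i>w_{i+1}\}$; $X_J=\sum_{\mathrm{Des}(w)\subseteq J}w\in\mathbb{Q}B_n$. $\varphi:\mathbb{Q}B_n\to\mathbb{Q}\mathfrak{S}_n$ is the linear extension of $w\mapsto|w_1|\dots|w_n|$. For $u\in\mathfrak{S}_n$, $\mathrm{Peak}(u)=\{i\in[n-1]:u_{i-1}<u_i>u_{i+1}\}$ with $u_0=0$; $\mathcal{F}_n$ is the set of subsets of $[n-1]$ with no two consecutive integers; $P_F=\sum_{\mathrm{Peak}(u)=F}u$. $J+1=\{j+1:j\in J\}$. *)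

theory Defs
  imports Complex_Main
begin

text \<open>Elements of the group algebras QB_n and QS_n are coefficient functions into rat.\<close>

definition signed_perms :: "nat \<Rightarrow> int list set" where
  "signed_perms n = {w. length w = n \<and> distinct (map abs w) \<and> abs ` set w = {1..int n}}"

definition perms :: "nat \<Rightarrow> nat list set" where
  "perms n = {u. length u = n \<and> distinct u \<and> set u = {1..n}}"

text \<open>w_i with the convention w_0 = 0 (1-based indexing)\<close>
definition sval :: "int list \<Rightarrow> nat \<Rightarrow> int" where
  "sval w i = (if i = 0 then 0 else w ! (i - 1))"

definition uval :: "nat list \<Rightarrow> nat \<Rightarrow> nat" where
  "uval u i = (if i = 0 then 0 else u ! (i - 1))"

definition Des :: "int list \<Rightarrow> nat set" where
  "Des w = {i. i < length w \<and> sval w i > sval w (Suc i)}"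

definition Peak :: "nat list \<Rightarrow> nat set" where
  "Peak u = {i. 1 \<le> i \<and> i \<le> length u - 1 \<and>
              uval u (i - 1) < uval u i \<and> uval u i > uval u (Suc i)}"

definition XJ :: "nat \<Rightarrow> nat set \<Rightarrow> int list \<Rightarrow> rat" where
  "XJ n J = (\<lambda>w. if w \<in> signed_perms n \<and> Des w \<subseteq> J then 1 else 0)"

text \<open>linear extension of w \<mapsto> |w_1| ... |w_n|\<close>
definition phi :: "nat \<Rightarrow> (int list \<Rightarrow> rat) \<Rightarrow> nat list \<Rightarrow> rat" where
  "phi n x = (\<lambda>u. \<Sum>w \<in> {w \<in> signed_perms n. map (nat \<circ> abs) w = u}. x w)"

definition Fn :: "nat \<Rightarrow> nat set set" where
  "Fn n = {F. F \<subseteq> {1..n - 1} \<and> (\<forall>i\<in>F. Suc i \<notin> F)}"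

definition PF :: "nat \<Rightarrow> nat set \<Rightarrow> nat list \<Rightarrow> rat" where
  "PF n F = (\<lambda>u. if u \<in> perms n \<and> Peak u = F then 1 else 0)"

end

theory Submission
  imports Defs
begin

definition sw :: "nat list \<Rightarrow> nat set \<Rightarrow> int list" where
  "sw u N = map (\<lambda>k. if k \<in> N then - int (u!k) else int (u!k)) [0..<length u]"

lemma perms_pos: "u \<in> perms n \<Longrightarrow> k < n \<Longrightarrow> u!k \<ge> 1"
  unfolding perms_def by (metis (mono_tags, lifting) atLeastAtMost_iff mem_Collect_eq nth_mem)

lemma perms_dist: "u \<in> perms n \<Longrightarrow> k < n \<Longrightarrow> k' < n \<Longrightarrow> k \<noteq> k' \<Longrightarrow> u!k \<noteq> u!k'"
  unfolding perms_def by (simp add: nth_eq_iff_index_eq)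

lemma sw_len[simp]: "length (sw u N) = length u"
  by (simp add: sw_def)

lemma sw_nth: "k < length u \<Longrightarrow> sw u N ! k = (if k \<in> N then - int (u!k) else int (u!k))"
  by (simp add: sw_def)

lemma sw_abs: "map abs (sw u N) = map int u"
  by (rule nth_equalityI) (auto simp: sw_nth)

lemma sw_mem:
  assumes "u \<in> perms n"
  shows "sw u N \<in> signed_perms n \<and> map (nat \<circ> abs) (sw u N) = u"
proof -
  have l: "length u = n" using assms by (simp add: perms_def)
  have "map (nat \<circ> abs) (sw u N) = map nat (map abs (sw u N))" by simp
  also have "\<dots> = u" unfolding sw_abs by (simp add: map_idI)
  finally have m: "map (nat \<circ> abs) (sw u N) = u" .
  have d: "distinct (map abs (sw u N))" unfolding sw_abs using assms
    by (simp add: perms_def distinct_map inj_on_def)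
  have "abs ` set (sw u N) = set (map abs (sw u N))" by simp
  also have "\<dots> = int ` {1..n}" unfolding sw_abs using assms by (simp add: perms_def)
  also have "\<dots> = {1..int n}" by (simp add: image_int_atLeastAtMost)
  finally show ?thesis using l d m by (simp add: signed_perms_def)
qed

lemma sw_inj:
  assumes "u \<in> perms n"
  shows "inj_on (sw u) (Pow {0..<n})"
proof (rule inj_onI)
  fix N N' assume N: "N \<in> Pow {0..<n}" and N': "N' \<in> Pow {0..<n}" and e: "sw u N = sw u N'"
  have l: "length u = n" using assms by (simp add: perms_def)
  show "N = N'"
  proof (rule set_eqI)
    fix k
    show "k \<in> N \<longleftrightarrow> k \<in> N'"
    proof (cases "k < n")
      case True
      have "sw u N ! k = sw u N' ! k" using e by simp
      moreover have "u!k \<ge> 1" using perms_pos[OF assms True] .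
      ultimately show ?thesis using True l by (auto simp: sw_nth split: if_splits)
    next
      case False then show ?thesis using N N' by auto
    qed
  qed
qed

lemma sw_surj:
  assumes "w \<in> signed_perms n" "map (nat \<circ> abs) w = u"
  shows "w = sw u {k. k < n \<and> w!k < 0}"
proof -
  have l: "length w = n" "length u = n" using assms by (auto simp: signed_perms_def)
  show ?thesis
  proof (rule nth_equalityI)
    show "length w = length (sw u {k. k < n \<and> w!k < 0})" using l by simp
    fix k assume k: "k < length w"
    have "u!k = nat \<bar>w!k\<bar>" using assms(2) k by auto
    then show "w!k = sw u {k. k < n \<and> w!k < 0} ! k" using k l by (simp add: sw_nth)
  qed
qed

definition asc :: "nat list \<Rightarrow> nat \<Rightarrow> bool" where
  "asc u i = (i = 0 \<or> u!(i-1) < u!i)"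

lemma des_iff:
  assumes "u \<in> perms n" "i < n"
  shows "(i \<in> Des (sw u N)) = (if asc u i then i \<in> N else i - 1 \<notin> N)"
proof -
  have l: "length u = n" using assms by (simp add: perms_def)
  have p: "u!i \<ge> 1" using perms_pos[OF assms] .
  show ?thesis
  proof (cases "i = 0")
    case True
    then show ?thesis using p l assms by (auto simp: Des_def sval_def asc_def sw_nth)
  next
    case False
    have p1: "u!(i-1) \<ge> 1" using perms_pos[OF assms(1)] assms(2) by simp
    have ne: "u!(i-1) \<noteq> u!i" using perms_dist[OF assms(1), of "i-1" i] assms(2) False by simp
    have e1: "sval (sw u N) i = (if i - 1 \<in> N then - int (u!(i-1)) else int (u!(i-1)))"
      using False l assms(2) by (simp add: sval_def sw_nth)
    have e2: "sval (sw u N) (Suc i) = (if i \<in> N then - int (u!i) else int (u!i))"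
      using l assms(2) by (simp add: sval_def sw_nth)
    have "(i \<in> Des (sw u N)) = (sval (sw u N) i > sval (sw u N) (Suc i))"
      using l assms(2) by (simp add: Des_def)
    also have "\<dots> = (if asc u i then i \<in> N else i - 1 \<notin> N)"
      unfolding e1 e2 asc_def using False ne p p1 by (auto split: if_splits)
    finally show ?thesis .
  qed
qed

lemma card_between:
  assumes "finite A" "P \<subseteq> A" "P \<inter> Q = {}"
  shows "card {N. P \<subseteq> N \<and> N \<subseteq> A - Q} = 2 ^ card (A - Q - P)"
proof -
  have "{N. P \<subseteq> N \<and> N \<subseteq> A - Q} = (\<lambda>M. M \<union> P) ` Pow (A - Q - P)"
  proof (rule set_eqI, rule iffI)
    fix N assume "N \<in> {N. P \<subseteq> N \<and> N \<subseteq> A - Q}"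
    then have "N = (N - P) \<union> P" "N - P \<in> Pow (A - Q - P)" by auto
    then show "N \<in> (\<lambda>M. M \<union> P) ` Pow (A - Q - P)" by blast
  next
    fix N assume "N \<in> (\<lambda>M. M \<union> P) ` Pow (A - Q - P)"
    then show "N \<in> {N. P \<subseteq> N \<and> N \<subseteq> A - Q}" using assms by auto
  qed
  moreover have "inj_on (\<lambda>M. M \<union> P) (Pow (A - Q - P))"
    by (rule inj_onI) blast
  ultimately show ?thesis using assms(1) by (simp add: card_image card_Pow)
qed

lemma peak_conflict:
  assumes u: "u \<in> perms n" and J: "J \<subseteq> {0..<n}"
  defines "C \<equiv> {0..<n} - J"
  shows "((\<lambda>i. i - 1) ` {i\<in>C. \<not> asc u i} \<inter> {i\<in>C. asc u i} = {}) =
         (Peak u \<subseteq> J \<union> Suc ` J)"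
proof -
  have l: "length u = n" using u by (simp add: perms_def)
  have A: "False" if k: "k \<in> C" "asc u k" and i: "i \<in> C" "\<not> asc u i" "k = i - 1"
       and pk: "Peak u \<subseteq> J \<union> Suc ` J" for i k
  proof -
    have i1: "i \<ge> 1" using i by (auto simp: asc_def)
    have ik: "i = Suc k" using i1 i by simp
    have "i < n" using i C_def by auto
    have ne: "u!k \<noteq> u!i" using perms_dist[OF u, of k i] \<open>i < n\<close> ik by simp
    have pos: "u!k \<ge> 1" using perms_pos[OF u, of k] \<open>i < n\<close> ik by simp
    have c1: "uval u k < uval u (Suc k)"
      using k(2) pos by (cases k) (auto simp: uval_def asc_def)
    have c2: "uval u (Suc k) > uval u (Suc (Suc k))"
      using i(2) ne ik by (simp add: uval_def asc_def)
    have "Suc k \<in> Peak u"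
      unfolding Peak_def using c1 c2 \<open>i < n\<close> ik l by simp
    then have "i \<in> Peak u" using ik by simp
    then have "i \<in> J \<or> k \<in> J" using pk ik by auto
    then show False using i k C_def by auto
  qed
  have B: "\<exists>i k. k \<in> C \<and> asc u k \<and> i \<in> C \<and> \<not> asc u i \<and> k = i - 1"
    if j: "j \<in> Peak u" "j \<notin> J \<union> Suc ` J" for j
  proof -
    have j1: "1 \<le> j" "j < n" using j l by (auto simp: Peak_def)
    obtain k where jk: "j = Suc k" using j1 by (cases j) auto
    have kC: "k \<in> C" using j jk j1 C_def by auto
    have jC: "j \<in> C" using j j1 C_def by auto
    have pk1: "uval u k < uval u (Suc k)" "uval u (Suc k) > uval u (Suc (Suc k))"
      using j(1) jk by (simp_all add: Peak_def)
    have "asc u k" using pk1(1) by (cases k) (simp_all add: uval_def asc_def)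
    moreover have "\<not> asc u j" using pk1(2) jk by (simp add: uval_def asc_def)
    ultimately have "k \<in> C \<and> asc u k \<and> j \<in> C \<and> \<not> asc u j \<and> k = j - 1"
      using kC jC jk by simp
    then show ?thesis by blast
  qed
  show ?thesis
  proof
    assume e: "(\<lambda>i. i - 1) ` {i\<in>C. \<not> asc u i} \<inter> {i\<in>C. asc u i} = {}"
    show "Peak u \<subseteq> J \<union> Suc ` J"
    proof (rule ccontr)
      assume "\<not> Peak u \<subseteq> J \<union> Suc ` J"
      then obtain j where "j \<in> Peak u" "j \<notin> J \<union> Suc ` J" by blast
      from B[OF this] obtain i k where "k \<in> C \<and> asc u k \<and> i \<in> C \<and> \<not> asc u i \<and> k = i - 1" by blast
      then have "k \<in> (\<lambda>i. i - 1) ` {i\<in>C. \<not> asc u i} \<inter> {i\<in>C. asc u i}" by blast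
      then show False using e by blast
    qed
  next
    assume pk: "Peak u \<subseteq> J \<union> Suc ` J"
    show "(\<lambda>i. i - 1) ` {i\<in>C. \<not> asc u i} \<inter> {i\<in>C. asc u i} = {}"
      using A[OF _ _ _ _ _ pk] by blast
  qed
qed

lemma to_perm:
  assumes "w \<in> signed_perms n" "map (nat \<circ> abs) w = u"
  shows "u \<in> perms n"
proof -
  have l: "length w = n" and d: "distinct (map abs w)" and s: "abs ` set w = {1..int n}"
    using assms(1) by (auto simp: signed_perms_def)
  have u: "u = map nat (map abs w)" using assms(2) by simp
  have "inj_on nat (set (map abs w))" using s by (auto simp: inj_on_def)
  then have "distinct (map nat (map abs w))" using d by (simp only: distinct_map)
  then have "distinct u" using u by simp
  moreover have "set u = nat ` {1..int n}" unfolding u s[symmetric] by (simp add: image_image)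
  moreover have "nat ` {1..int n} = {1..n}"
  proof -
    have "{1..int n} = int ` {1..n}" by (simp add: image_int_atLeastAtMost)
    then show ?thesis by (simp add: image_image)
  qed
  ultimately show ?thesis using l u by (simp add: perms_def)
qed

lemma peak_Fn: "u \<in> perms n \<Longrightarrow> Peak u \<in> Fn n"
  unfolding Fn_def Peak_def perms_def by auto

lemma count_main:
  assumes u: "u \<in> perms n" and J: "J \<subseteq> {0..<n}"
  shows "card {w \<in> signed_perms n. map (nat \<circ> abs) w = u \<and> Des w \<subseteq> J} =
         (if Peak u \<subseteq> J \<union> Suc ` J then 2 ^ card J else 0)"
proof -
  define C where "C = {0..<n} - J"
  define Q where "Q = {i\<in>C. asc u i}"
  define P where "P = (\<lambda>i. i - 1) ` {i\<in>C. \<not> asc u i}"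
  define K where "K = {N \<in> Pow {0..<n}. \<forall>i\<in>C. (if asc u i then i \<notin> N else i - 1 \<in> N)}"
  have l: "length u = n" using u by (simp add: perms_def)
  have CP: "C \<subseteq> {0..<n}" "P \<subseteq> {0..<n}" "Q \<subseteq> {0..<n}"
    unfolding C_def P_def Q_def by auto
  have desJ: "(Des (sw u N) \<subseteq> J) = (\<forall>i\<in>C. (if asc u i then i \<notin> N else i - 1 \<in> N))" for N
  proof -
    have "Des (sw u N) \<subseteq> {0..<n}" using l by (auto simp: Des_def)
    then have "(Des (sw u N) \<subseteq> J) = (\<forall>i\<in>C. i \<notin> Des (sw u N))" unfolding C_def by auto
    also have "\<dots> = (\<forall>i\<in>C. (if asc u i then i \<notin> N else i - 1 \<in> N))"
      using des_iff[OF u] unfolding C_def by auto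
    finally show ?thesis .
  qed
  have eqS: "{w \<in> signed_perms n. map (nat \<circ> abs) w = u \<and> Des w \<subseteq> J} = sw u ` K"
  proof (rule set_eqI, rule iffI)
    fix w assume "w \<in> {w \<in> signed_perms n. map (nat \<circ> abs) w = u \<and> Des w \<subseteq> J}"
    then have w: "w \<in> signed_perms n" "map (nat \<circ> abs) w = u" "Des w \<subseteq> J" by auto
    define N where "N = {k. k < n \<and> w!k < 0}"
    have e: "w = sw u N" using sw_surj[OF w(1,2)] N_def by simp
    have "Des (sw u N) \<subseteq> J" using w(3) e by simp
    then have "\<forall>i\<in>C. (if asc u i then i \<notin> N else i - 1 \<in> N)" using desJ by blast
    moreover have "N \<in> Pow {0..<n}" unfolding N_def by auto
    ultimately have "N \<in> K" unfolding K_def by blast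
    then show "w \<in> sw u ` K" using e by blast
  next
    fix w assume "w \<in> sw u ` K"
    then obtain N where N: "N \<in> K" "w = sw u N" by blast
    then show "w \<in> {w \<in> signed_perms n. map (nat \<circ> abs) w = u \<and> Des w \<subseteq> J}"
      using sw_mem[OF u] desJ unfolding K_def by auto
  qed
  have "inj_on (sw u) K" using sw_inj[OF u] by (rule inj_on_subset) (auto simp: K_def)
  then have cK: "card {w \<in> signed_perms n. map (nat \<circ> abs) w = u \<and> Des w \<subseteq> J} = card K"
    using eqS by (simp add: card_image)
  have Keq: "K = {N. P \<subseteq> N \<and> N \<subseteq> {0..<n} - Q}"
  proof (rule set_eqI, rule iffI)
    fix N assume "N \<in> K"
    then show "N \<in> {N. P \<subseteq> N \<and> N \<subseteq> {0..<n} - Q}"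
      unfolding K_def P_def Q_def by (auto split: if_splits)
  next
    fix N assume N: "N \<in> {N. P \<subseteq> N \<and> N \<subseteq> {0..<n} - Q}"
    have "\<forall>i\<in>C. (if asc u i then i \<notin> N else i - 1 \<in> N)"
    proof
      fix i assume "i \<in> C"
      then show "(if asc u i then i \<notin> N else i - 1 \<in> N)"
        using N unfolding P_def Q_def by auto
    qed
    then show "N \<in> K" using N unfolding K_def by auto
  qed
  have pc: "(P \<inter> Q = {}) = (Peak u \<subseteq> J \<union> Suc ` J)"
    using peak_conflict[OF u J] unfolding P_def Q_def C_def by simp
  show ?thesis
  proof (cases "Peak u \<subseteq> J \<union> Suc ` J")
    case False
    then obtain k where "k \<in> P" "k \<in> Q" using pc by blast
    then have "K = {}" unfolding Keq by auto
    then show ?thesis using cK False by simp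
  next
    case True
    then have PQ: "P \<inter> Q = {}" using pc by simp
    define g where "g = (\<lambda>i. if asc u i then i else i - 1)"
    have gC: "g ` C = Q \<union> P" unfolding g_def Q_def P_def by auto
    have ig: "inj_on g C"
    proof (rule inj_onI)
      fix i i' assume i: "i \<in> C" "i' \<in> C" "g i = g i'"
      have a0: "\<not> asc u i \<Longrightarrow> i \<ge> 1" "\<not> asc u i' \<Longrightarrow> i' \<ge> 1" by (auto simp: asc_def)
      show "i = i'"
      proof (cases "asc u i"; cases "asc u i'")
        assume "asc u i" "\<not> asc u i'"
        then have "i \<in> Q" "i \<in> P" using i unfolding g_def Q_def P_def by auto
        then show ?thesis using PQ by blast
      next
        assume "\<not> asc u i" "asc u i'"
        then have "i' \<in> Q" "i' \<in> P" using i unfolding g_def Q_def P_def by (auto intro!: image_eqI)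
        then show ?thesis using PQ by blast
      qed (use i a0 in \<open>auto simp: g_def\<close>)
    qed
    have fJ: "finite J" using J finite_subset by blast
    have "card C = n - card J" unfolding C_def using J fJ by (simp add: card_Diff_subset)
    have "{0..<n} - Q - P = {0..<n} - g ` C" using gC by auto
    moreover have "g ` C \<subseteq> {0..<n}" using CP gC by auto
    moreover have "finite (g ` C)" using \<open>g ` C \<subseteq> {0..<n}\<close> finite_subset by blast
    ultimately have "card ({0..<n} - Q - P) = n - card (g ` C)"
      by (simp add: card_Diff_subset)
    also have "\<dots> = card J" using ig \<open>card C = n - card J\<close> J fJ card_mono[OF _ J]
      by (simp add: card_image)
    finally have cc: "card ({0..<n} - Q - P) = card J" .
    have "card K = 2 ^ card J" unfolding Keq using card_between[OF _ CP(2) PQ] cc by simp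
    then show ?thesis using cK True by simp
  qed
qed

theorem proposition3p3:
  fixes n :: nat and J :: "nat set"
  assumes "J \<subseteq> {0..<n}"
  shows "phi n (XJ n J) =
    (\<lambda>u. 2 ^ card J * (\<Sum>F \<in> {F \<in> Fn n. F \<subseteq> J \<union> Suc ` J}. PF n F u))"
proof
  fix u
  define W where "W = {w \<in> signed_perms n. map (nat \<circ> abs) w = u}"
  have finFn: "finite {F \<in> Fn n. F \<subseteq> J \<union> Suc ` J}"
    by (rule finite_subset[of _ "Pow {1..n-1}"]) (auto simp: Fn_def)
  show "phi n (XJ n J) u = 2 ^ card J * (\<Sum>F \<in> {F \<in> Fn n. F \<subseteq> J \<union> Suc ` J}. PF n F u)"
  proof (cases "u \<in> perms n")
    case False
    then have "W = {}" unfolding W_def using to_perm by blast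
    then show ?thesis using False by (simp add: phi_def PF_def W_def[symmetric])
  next
    case True
    have Wf: "W = sw u ` Pow {0..<n}"
    proof (rule set_eqI, rule iffI)
      fix w assume "w \<in> W"
      then have w: "w \<in> signed_perms n" "map (nat \<circ> abs) w = u" by (auto simp: W_def)
      have "{k. k < n \<and> w!k < 0} \<in> Pow {0..<n}" by auto
      then show "w \<in> sw u ` Pow {0..<n}" using sw_surj[OF w] by (rule rev_image_eqI)
    next
      fix w assume "w \<in> sw u ` Pow {0..<n}"
      then obtain N where "w = sw u N" by blast
      then show "w \<in> W" using sw_mem[OF True, of N] by (simp add: W_def)
    qed
    then have fW: "finite W" by simp
    have "phi n (XJ n J) u = (\<Sum>w\<in>W. if Des w \<subseteq> J then 1 else 0)"
      unfolding phi_def XJ_def W_def by (rule sum.cong) auto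
    also have "\<dots> = (\<Sum>w\<in>{w\<in>W. Des w \<subseteq> J}. 1)"
      by (rule sum.inter_filter[OF fW, symmetric])
    also have "\<dots> = of_nat (card {w\<in>W. Des w \<subseteq> J})" by simp
    also have "{w\<in>W. Des w \<subseteq> J} = {w \<in> signed_perms n. map (nat \<circ> abs) w = u \<and> Des w \<subseteq> J}"
      unfolding W_def by auto
    finally have L: "phi n (XJ n J) u = (if Peak u \<subseteq> J \<union> Suc ` J then 2 ^ card J else 0)"
      using count_main[OF True assms] by simp
    have "(\<Sum>F \<in> {F \<in> Fn n. F \<subseteq> J \<union> Suc ` J}. PF n F u) =
          (\<Sum>F \<in> {F \<in> Fn n. F \<subseteq> J \<union> Suc ` J}. if F = Peak u then 1 else 0)"
      unfolding PF_def using True by (intro sum.cong) auto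
    also have "\<dots> = (if Peak u \<in> {F \<in> Fn n. F \<subseteq> J \<union> Suc ` J} then 1 else 0)"
      using finFn by (simp add: sum.delta)
    finally show ?thesis using L peak_Fn[OF True] by simp
  qed
qed

end
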